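(* Let $\gamma>1$, let $\bar\rho$ and $d$ be as in the context with $\phi$ sufficiently smooth, and let $i\ge1$ be an integer. Then for every sufficiently smooth $X:[0,1]\to\mathbb R$, $$\mathcal D_iL_0X=\mathcal L_i\mathcal D_iX+\sum_{j=0}^{i-1}q_{ij}\,\mathcal D_{i-j}X,\qquad q_{ij}=\sum_{k=1}^{2+j}\frac{\sum_{\ell=0}^{k}c_{ijk\ell}\,\partial_r^\ell d}{r^{2+j-k}},$$ for some functions $c_{ijk\ell}$ that are bounded on $[0,1]$.
   Context: $\phi\in C^k[0,1]$ with $\phi>0$ and $\phi'(0)=0$; $\bar\rho:=\phi$ and $d(r):=\bar\rho(r)^{-\gamma}\int_r^1\ell\bar\rho(\ell)\,d\ell$. $D_rf=r^{-2}\partial_r(r^2f)$; $\mathcal D_0=\mathrm{id}$, $\mathcal D_j=(\partial_rD_r)^{j/2}$ for $j$ even and $\mathcal D_j=D_r(\partial_rD_r)^{(j-1)/2}$ for $j$ odd. For $m\ge0$: $L_mf=\frac{1}{\bar\rho^{1+m(\gamma-1)}d^m}\partial_r\big(\bar\rho^{\gamma+m(\gamma-1)}d^{1+m}D_rf\big)$ and $L_m^*h=\frac{1}{\bar\rho^{1+m(\gamma-1)}d^m}D_r\big(\bar\rho^{\gamma+m(\gamma-1)}d^{1+m}\partial_rh\big)$. Then $\mathcal L_j\mathcal D_j:=L_j\mathcal D_j$ if $j$ is even and $\mathcal L_j\mathcal D_j:=L_j^*\mathcal D_j$ if $j$ is odd. *)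

theory Defs
  imports "HOL-Analysis.Analysis"
begin

definition Ck_on :: "nat \<Rightarrow> real set \<Rightarrow> (real \<Rightarrow> real) \<Rightarrow> bool" where
  "Ck_on k S f \<longleftrightarrow>
     (\<exists>D :: nat \<Rightarrow> real \<Rightarrow> real.
        (\<forall>x\<in>S. D 0 x = f x) \<and>
        (\<forall>j<k. \<forall>x\<in>S. (D j has_real_derivative D (Suc j) x) (at x within S)) \<and>
        (\<forall>j\<le>k. continuous_on S (D j)))"

text \<open>rho-bar := phi; d(r) = rho-bar(r)^(-gamma) * int_r^1 l rho-bar(l) dl\<close>
definition dfun :: "real \<Rightarrow> (real \<Rightarrow> real) \<Rightarrow> real \<Rightarrow> real" where
  "dfun \<gamma> \<phi> r = \<phi> r powr (-\<gamma>) * integral {r..1} (\<lambda>l. l * \<phi> l)"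

definition Dr :: "(real \<Rightarrow> real) \<Rightarrow> real \<Rightarrow> real" where
  "Dr f r = deriv (\<lambda>s. s\<^sup>2 * f s) r / r\<^sup>2"

fun calD :: "nat \<Rightarrow> (real \<Rightarrow> real) \<Rightarrow> real \<Rightarrow> real" where
  "calD 0 f = f"
| "calD (Suc j) f = (if even j then Dr (calD j f) else deriv (calD j f))"

definition Lop :: "real \<Rightarrow> (real \<Rightarrow> real) \<Rightarrow> nat \<Rightarrow> (real \<Rightarrow> real) \<Rightarrow> real \<Rightarrow> real" where
  "Lop \<gamma> \<phi> m f r =
     deriv (\<lambda>s. \<phi> s powr (\<gamma> + real m * (\<gamma> - 1)) * dfun \<gamma> \<phi> s ^ (1 + m) * Dr f s) r
     / (\<phi> r powr (1 + real m * (\<gamma> - 1)) * dfun \<gamma> \<phi> r ^ m)"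

definition Lstar :: "real \<Rightarrow> (real \<Rightarrow> real) \<Rightarrow> nat \<Rightarrow> (real \<Rightarrow> real) \<Rightarrow> real \<Rightarrow> real" where
  "Lstar \<gamma> \<phi> m h r =
     Dr (\<lambda>s. \<phi> s powr (\<gamma> + real m * (\<gamma> - 1)) * dfun \<gamma> \<phi> s ^ (1 + m) * deriv h s) r
     / (\<phi> r powr (1 + real m * (\<gamma> - 1)) * dfun \<gamma> \<phi> r ^ m)"

definition calL :: "real \<Rightarrow> (real \<Rightarrow> real) \<Rightarrow> nat \<Rightarrow> (real \<Rightarrow> real) \<Rightarrow> real \<Rightarrow> real" where
  "calL \<gamma> \<phi> j g = (if even j then Lop \<gamma> \<phi> j g else Lstar \<gamma> \<phi> j g)"

end

theory Submission
  imports Defs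
begin


fun sm :: "nat \<Rightarrow> (real \<Rightarrow> real) \<Rightarrow> bool" where
  "sm 0 f = True"
| "sm (Suc k) f = ((\<forall>x\<in>{0<..<1}. f field_differentiable at x) \<and> sm k (deriv f))"

fun bd :: "nat \<Rightarrow> (real \<Rightarrow> real) \<Rightarrow> bool" where
  "bd 0 f = bounded (f ` {0<..<1})"
| "bd (Suc k) f = (bounded (f ` {0<..<1}) \<and> (\<forall>x\<in>{0<..<1}. f field_differentiable at x) \<and> bd k (deriv f))"

lemma bounded_abs_iff: "bounded (f ` S) \<longleftrightarrow> (\<exists>B. \<forall>x\<in>S. \<bar>f x :: real\<bar> \<le> B)"
  by (auto simp: bounded_iff)

lemma deriv_cong_I:
  assumes "\<forall>x\<in>{0<..<1::real}. f x = g x" "x \<in> {0<..<1}"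
  shows "deriv f x = deriv g x"
proof (rule deriv_cong_ev[OF _ refl])
  show "\<forall>\<^sub>F y in nhds x. f y = g y"
    using eventually_nhds_in_open[of "{0<..<1::real}" x] assms
    by (auto elim!: eventually_mono)
qed

lemma diff_cong_I:
  assumes "\<forall>x\<in>{0<..<1::real}. f x = g x" "x \<in> {0<..<1}" "f field_differentiable at x"
  shows "g field_differentiable at x"
  using assms has_field_derivative_transform_within_open[of f _ x "{0<..<1}" g]
  by (auto simp: field_differentiable_def)

lemma sm_cong: "\<forall>x\<in>{0<..<1::real}. f x = g x \<Longrightarrow> sm k f = sm k g"
proof (induction k arbitrary: f g)
  case 0 then show ?case by simp
next
  case (Suc k)
  have "\<forall>x\<in>{0<..<1::real}. deriv f x = deriv g x" using Suc.prems deriv_cong_I by blast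
  then have "sm k (deriv f) = sm k (deriv g)" using Suc.IH by blast
  moreover have "(\<forall>x\<in>{0<..<1}. f field_differentiable at x) = (\<forall>x\<in>{0<..<1}. g field_differentiable at x)"
    using Suc.prems diff_cong_I[of f g] diff_cong_I[of g f] by auto
  ultimately show ?case by simp
qed

lemma bd_cong: "\<forall>x\<in>{0<..<1::real}. f x = g x \<Longrightarrow> bd k f = bd k g"
proof (induction k arbitrary: f g)
  case 0 then show ?case by (simp add: image_def)
next
  case (Suc k)
  have "\<forall>x\<in>{0<..<1::real}. deriv f x = deriv g x" using Suc.prems deriv_cong_I by blast
  then have "bd k (deriv f) = bd k (deriv g)" using Suc.IH by blast
  moreover have "(\<forall>x\<in>{0<..<1}. f field_differentiable at x) = (\<forall>x\<in>{0<..<1}. g field_differentiable at x)"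
    using Suc.prems diff_cong_I[of f g] diff_cong_I[of g f] by auto
  moreover have "f ` {0<..<1} = g ` {0<..<1}" using Suc.prems by (auto simp: image_def)
  ultimately show ?case by simp
qed

lemma sm_mono: "sm (Suc k) f \<Longrightarrow> sm k f"
  by (induction k arbitrary: f) auto

lemma sm_mono': "sm k f \<Longrightarrow> k' \<le> k \<Longrightarrow> sm k' f"
proof (induction k)
  case 0 then show ?case by simp
next
  case (Suc k) then show ?case using sm_mono by (metis le_Suc_eq)
qed

lemma bd_mono: "bd (Suc k) f \<Longrightarrow> bd k f"
  by (induction k arbitrary: f) auto

lemma bd_mono': "bd k f \<Longrightarrow> k' \<le> k \<Longrightarrow> bd k' f"
proof (induction k)
  case 0 then show ?case by simp
next
  case (Suc k) then show ?case using bd_mono by (metis le_Suc_eq)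
qed

lemma bd_sm: "bd k f \<Longrightarrow> sm k f"
  by (induction k arbitrary: f) auto

lemma bd_bounded: "bd k f \<Longrightarrow> bounded (f ` {0<..<1})"
  by (cases k) auto

lemma bd_diff: "bd (Suc k) f \<Longrightarrow> x \<in> {0<..<1} \<Longrightarrow> (f has_real_derivative deriv f x) (at x)"
  by (simp add: DERIV_deriv_iff_field_differentiable)

lemma sm_diff: "sm (Suc k) f \<Longrightarrow> x \<in> {0<..<1} \<Longrightarrow> (f has_real_derivative deriv f x) (at x)"
  by (simp add: DERIV_deriv_iff_field_differentiable)

lemma sm_deriv_iter: "sm k f \<Longrightarrow> l \<le> k \<Longrightarrow> sm (k - l) ((deriv ^^ l) f)"
proof (induction l arbitrary: k f)
  case 0 then show ?case by simp
next
  case (Suc l)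
  then obtain k' where k: "k = Suc k'" by (cases k) auto
  with Suc have "sm (k' - l) ((deriv ^^ l) (deriv f))" by auto
  then show ?case by (simp add: k funpow_Suc_right del: funpow.simps)
qed

lemma bd_deriv_iter: "bd k f \<Longrightarrow> l \<le> k \<Longrightarrow> bd (k - l) ((deriv ^^ l) f)"
proof (induction l arbitrary: k f)
  case 0 then show ?case by simp
next
  case (Suc l)
  then obtain k' where k: "k = Suc k'" by (cases k) auto
  with Suc have "bd (k' - l) ((deriv ^^ l) (deriv f))" by auto
  then show ?case by (simp add: k funpow_Suc_right del: funpow.simps)
qed




lemma deriv_add_I: "f field_differentiable at x \<Longrightarrow> g field_differentiable at x \<Longrightarrow>
   deriv (\<lambda>x. f x + g x) x = deriv f x + deriv g x"
  by (intro DERIV_imp_deriv derivative_intros) (auto simp: DERIV_deriv_iff_field_differentiable)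

lemma deriv_mult_I: "f field_differentiable at x \<Longrightarrow> g field_differentiable at x \<Longrightarrow>
   deriv (\<lambda>x. f x * g x) x = f x * deriv g x + deriv f x * g x"
  using DERIV_imp_deriv[OF DERIV_mult[of f "deriv f x" x _ g "deriv g x"]]
  by (simp add: DERIV_deriv_iff_field_differentiable algebra_simps)

lemma sm_cong': "sm k f \<Longrightarrow> \<forall>x\<in>{0<..<1::real}. g x = f x \<Longrightarrow> sm k g"
  using sm_cong[of g f k] by simp

lemma bd_cong': "bd k f \<Longrightarrow> \<forall>x\<in>{0<..<1::real}. g x = f x \<Longrightarrow> bd k g"
  using bd_cong[of g f k] by simp

lemma sm_const: "sm k (\<lambda>x. c)"
proof (induction k arbitrary: c)
  case (Suc k)
  have "sm k (deriv (\<lambda>x. c))" using Suc[of 0] by simp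
  then show ?case by simp
qed simp

lemma bd_const: "bd k (\<lambda>x. c)"
proof (induction k arbitrary: c)
  case 0 then show ?case by (auto simp: bounded_abs_iff)
next
  case (Suc k)
  have "bd k (deriv (\<lambda>x. c))" using Suc[of 0] by simp
  then show ?case by (auto simp: bounded_abs_iff)
qed

lemma sm_add: "sm k f \<Longrightarrow> sm k g \<Longrightarrow> sm k (\<lambda>x. f x + g x)"
proof (induction k arbitrary: f g)
  case (Suc k)
  have "sm k (\<lambda>x. deriv f x + deriv g x)" using Suc.prems by (intro Suc.IH) auto
  moreover have "\<forall>x\<in>{0<..<1}. deriv (\<lambda>x. f x + g x) x = deriv f x + deriv g x"
    using Suc.prems by (auto intro!: deriv_add_I)
  ultimately have "sm k (deriv (\<lambda>x. f x + g x))" by (rule sm_cong')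
  then show ?case using Suc.prems by (simp add: field_differentiable_add)
qed simp

lemma sm_mult: "sm k f \<Longrightarrow> sm k g \<Longrightarrow> sm k (\<lambda>x. f x * g x)"
proof (induction k arbitrary: f g)
  case (Suc k)
  have "sm k f" "sm k g" using Suc.prems sm_mono by blast+
  moreover have "sm k (deriv f)" "sm k (deriv g)" using Suc.prems by auto
  ultimately have "sm k (\<lambda>x. f x * deriv g x + deriv f x * g x)" using Suc.IH by (intro sm_add) auto
  moreover have "\<forall>x\<in>{0<..<1}. deriv (\<lambda>x. f x * g x) x = f x * deriv g x + deriv f x * g x"
    using Suc.prems by (auto intro!: deriv_mult_I)
  ultimately have "sm k (deriv (\<lambda>x. f x * g x))" by (rule sm_cong')
  then show ?case using Suc.prems by (simp add: field_differentiable_mult)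
qed simp

lemma sm_id: "sm k (\<lambda>x. x)"
proof (cases k)
  case (Suc k')
  have "\<forall>x\<in>{0<..<1::real}. deriv (\<lambda>x. x) x = 1" by auto
  then have "sm k' (deriv (\<lambda>x. x))" by (intro sm_cong'[OF sm_const[of _ 1]]) simp
  then show ?thesis using Suc by (auto intro: field_differentiable_ident)
qed simp

lemma bd_add: "bd k f \<Longrightarrow> bd k g \<Longrightarrow> bd k (\<lambda>x. f x + g x)"
proof (induction k arbitrary: f g)
  case 0
  then obtain A B where "\<forall>x\<in>{0<..<1}. \<bar>f x\<bar> \<le> A" "\<forall>x\<in>{0<..<1}. \<bar>g x\<bar> \<le> B"
    by (auto simp: bounded_abs_iff)
  then have "\<forall>x\<in>{0<..<1}. \<bar>f x + g x\<bar> \<le> A + B"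
    by (smt (verit))
  then show ?case by (auto simp: bounded_abs_iff)
next
  case (Suc k)
  have "bd k (\<lambda>x. deriv f x + deriv g x)" using Suc.prems by (intro Suc.IH) auto
  moreover have "\<forall>x\<in>{0<..<1}. deriv (\<lambda>x. f x + g x) x = deriv f x + deriv g x"
    using Suc.prems by (auto intro!: deriv_add_I)
  ultimately have "bd k (deriv (\<lambda>x. f x + g x))" by (rule bd_cong')
  moreover have "bounded ((\<lambda>x. f x + g x) ` {0<..<1})" using Suc.IH[of f g] Suc.prems bd_mono
    by (metis bd_bounded)
  ultimately show ?case using Suc.prems by (simp add: field_differentiable_add)
qed

lemma bd_mult: "bd k f \<Longrightarrow> bd k g \<Longrightarrow> bd k (\<lambda>x. f x * g x)"
proof (induction k arbitrary: f g)
  case 0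
  then obtain A B where "\<forall>x\<in>{0<..<1}. \<bar>f x\<bar> \<le> A" "\<forall>x\<in>{0<..<1}. \<bar>g x\<bar> \<le> B"
    by (auto simp: bounded_abs_iff)
  then have "\<forall>x\<in>{0<..<1}. \<bar>f x * g x\<bar> \<le> A * B"
    by (simp add: abs_mult mult_mono')
  then show ?case by (auto simp: bounded_abs_iff)
next
  case (Suc k)
  have "bd k f" "bd k g" using Suc.prems bd_mono by blast+
  moreover have "bd k (deriv f)" "bd k (deriv g)" using Suc.prems by auto
  ultimately have "bd k (\<lambda>x. f x * deriv g x + deriv f x * g x)" using Suc.IH by (intro bd_add) auto
  moreover have "\<forall>x\<in>{0<..<1}. deriv (\<lambda>x. f x * g x) x = f x * deriv g x + deriv f x * g x"
    using Suc.prems by (auto intro!: deriv_mult_I)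
  ultimately have "bd k (deriv (\<lambda>x. f x * g x))" by (rule bd_cong')
  moreover have "bounded ((\<lambda>x. f x * g x) ` {0<..<1})" using Suc.IH[of f g] Suc.prems bd_mono
    by (metis bd_bounded)
  ultimately show ?case using Suc.prems by (simp add: field_differentiable_mult)
qed

lemma bd_id: "bd k (\<lambda>x. x)"
proof (cases k)
  case 0 then show ?thesis by (auto simp: bounded_abs_iff intro!: exI[of _ 1])
next
  case (Suc k')
  have "\<forall>x\<in>{0<..<1::real}. deriv (\<lambda>x. x) x = 1" by auto
  then have "bd k' (deriv (\<lambda>x. x))" by (intro bd_cong'[OF bd_const[of _ 1]]) simp
  then show ?thesis using Suc by (auto intro: field_differentiable_ident simp: bounded_abs_iff intro!: exI[of _ 1])
qed

lemma sm_inv: "sm k g \<Longrightarrow> \<forall>x\<in>{0<..<1}. g x \<noteq> 0 \<Longrightarrow> sm k (\<lambda>x. 1 / g x)"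
proof (induction k arbitrary: g)
  case (Suc k)
  have "sm k g" using Suc.prems sm_mono by blast
  then have "sm k (\<lambda>x. 1 / g x)" using Suc.IH Suc.prems by blast
  moreover have "sm k (\<lambda>x. - deriv g x)" using Suc.prems sm_mult[OF sm_const[of k "-1"], of "deriv g"] by simp
  ultimately have "sm k (\<lambda>x. - deriv g x * ((1 / g x) * (1 / g x)))"
    by (intro sm_mult) auto
  moreover have "\<forall>x\<in>{0<..<1}. deriv (\<lambda>x. 1 / g x) x = - deriv g x * ((1 / g x) * (1 / g x))"
  proof
    fix x :: real assume x: "x \<in> {0<..<1}"
    have "DERIV g x :> deriv g x" using Suc.prems x by (simp add: DERIV_deriv_iff_field_differentiable)
    from DERIV_inverse_fun[OF this] x Suc.prems
    have "DERIV (\<lambda>x. inverse (g x)) x :> - (deriv g x * inverse (g x ^ Suc (Suc 0)))" by auto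
    from DERIV_imp_deriv[OF this] show "deriv (\<lambda>x. 1 / g x) x = - deriv g x * ((1 / g x) * (1 / g x))"
      by (simp add: inverse_eq_divide power2_eq_square)
  qed
  ultimately have "sm k (deriv (\<lambda>x. 1 / g x))" by (rule sm_cong')
  moreover have "\<forall>x\<in>{0<..<1}. (\<lambda>x. 1 / g x) field_differentiable at x"
    using Suc.prems by (simp add: field_differentiable_divide field_differentiable_const)
  ultimately show ?case by simp
qed simp

lemma bnd_powr:
  fixes f :: "real \<Rightarrow> real"
  assumes "bounded (f ` {0<..<1})" "m > 0" "\<forall>x\<in>{0<..<1}. f x \<ge> m"
  shows "bounded ((\<lambda>x. f x powr a) ` {0<..<1})"
proof -
  obtain B where B: "\<forall>x\<in>{0<..<1}. \<bar>f x\<bar> \<le> B" using assms(1) by (auto simp: bounded_abs_iff)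
  have "\<forall>x\<in>{0<..<1}. \<bar>f x powr a\<bar> \<le> max (m powr a) (B powr a)"
  proof
    fix x :: real assume x: "x \<in> {0<..<1}"
    have fx: "m \<le> f x" "f x \<le> B" using x B assms(3) using abs_le_D1 by (auto simp del: greaterThanLessThan_iff)
    show "\<bar>f x powr a\<bar> \<le> max (m powr a) (B powr a)"
    proof (cases "a \<ge> 0")
      case True
      then have "f x powr a \<le> B powr a" using fx assms(2) by (intro powr_mono2) auto
      then show ?thesis by simp
    next
      case False
      then have "f x powr a \<le> m powr a" using fx assms(2) by (intro powr_mono2') auto
      then show ?thesis by simp
    qed
  qed
  then show ?thesis by (auto simp: bounded_abs_iff)
qed

lemma bd_powr:
  assumes "bd k f" "m > 0" "\<forall>x\<in>{0<..<1}. f x \<ge> m"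
  shows "bd k (\<lambda>x. f x powr a)"
  using assms(1)
proof (induction k arbitrary: a)
  case 0 then show ?case using bnd_powr[OF _ assms(2,3)] by simp
next
  case (Suc k)
  then have "bd k f" using bd_mono by blast
  then have "bd k (\<lambda>x. f x powr (a - 1))" using Suc.IH by blast
  then have "bd k (\<lambda>x. a * f x powr (a - 1) * deriv f x)"
    using Suc.prems by (intro bd_mult bd_const) auto
  moreover have "\<forall>x\<in>{0<..<1}. DERIV (\<lambda>x. f x powr a) x :> a * f x powr (a - 1) * deriv f x"
  proof
    fix x :: real assume x: "x \<in> {0<..<1}"
    have "DERIV f x :> deriv f x" using Suc.prems x by (simp add: DERIV_deriv_iff_field_differentiable)
    from DERIV_fun_powr[OF this, of a] x assms(2,3)
    show "DERIV (\<lambda>x. f x powr a) x :> a * f x powr (a - 1) * deriv f x" by fastforce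
  qed
  ultimately have "bd k (deriv (\<lambda>x. f x powr a))" 
    by (elim bd_cong') (auto intro: DERIV_imp_deriv)
  moreover have "\<forall>x\<in>{0<..<1}. (\<lambda>x. f x powr a) field_differentiable at x"
    using \<open>\<forall>x\<in>{0<..<1}. DERIV (\<lambda>x. f x powr a) x :> _\<close> by (auto simp: field_differentiable_def)
  moreover have "bounded ((\<lambda>x. f x powr a) ` {0<..<1})" using bnd_powr Suc.prems assms(2,3) by simp
  ultimately show ?case by simp
qed




lemma bnd_cont: "continuous_on {0..1} f \<Longrightarrow> bounded (f ` {0<..<1::real})"
  by (meson bounded_subset compact_continuous_image compact_imp_bounded compact_Icc
      greaterThanLessThan_subseteq_atLeastAtMost_iff image_mono order_refl zero_le_one)

lemma at_I: "x \<in> {0<..<1::real} \<Longrightarrow> at x within {0..1} = at x"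
  by (intro at_within_interior) (simp add: interior_atLeastAtMost_real)

lemma Ck_bd: assumes "Ck_on k {0..1} f" shows "bd k f"
proof -
  obtain D where D0: "\<forall>x\<in>{0..1}. D 0 x = f x"
    and D1: "\<forall>j<k. \<forall>x\<in>{0..1}. (D j has_real_derivative D (Suc j) x) (at x within {0..1})"
    and D2: "\<forall>j\<le>k. continuous_on {0..1} (D j)"
    using assms unfolding Ck_on_def by blast
  have "\<forall>j. j + n \<le> k \<longrightarrow> bd n (D j)" for n
  proof (induction n)
    case 0 then show ?case using D2 bnd_cont by auto
  next
    case (Suc n)
    show ?case
    proof (intro allI impI)
      fix j assume j: "j + Suc n \<le> k"
      have der: "\<forall>x\<in>{0<..<1}. (D j has_real_derivative D (Suc j) x) (at x)"
      proof
        fix x :: real assume x: "x \<in> {0<..<1}"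
        have "j < k" using j by simp
        then show "(D j has_real_derivative D (Suc j) x) (at x)"
          using D1 x at_I[OF x] by (metis greaterThanLessThan_subseteq_atLeastAtMost_iff order_refl subsetD zero_le_one)
      qed
      have "bd n (D (Suc j))" using Suc.IH j by simp
      then have "bd n (deriv (D j))" using der by (elim bd_cong') (auto intro: DERIV_imp_deriv)
      moreover have "bounded (D j ` {0<..<1})" using D2 j by (intro bnd_cont) simp
      moreover have "\<forall>x\<in>{0<..<1}. D j field_differentiable at x"
        using der by (auto simp: field_differentiable_def)
      ultimately show "bd (Suc n) (D j)" by simp
    qed
  qed
  then have "bd k (D 0)" by simp
  then show ?thesis using D0 by (elim bd_cong') auto
qed

lemma Ck_cont: assumes "Ck_on k {0..1} f" shows "continuous_on {0..1} f"
proof -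
  obtain D where D0: "\<forall>x\<in>{0..1}. D 0 x = f x"
    and D2: "\<forall>j\<le>k. continuous_on {0..1} (D j)"
    using assms unfolding Ck_on_def by blast
  then show ?thesis using continuous_on_cong[of "{0..1}" "{0..1}" f "D 0"] by auto
qed

definition Fi :: "(real \<Rightarrow> real) \<Rightarrow> real \<Rightarrow> real" where
  "Fi \<phi> r = integral {r..1} (\<lambda>l. l * \<phi> l)"

lemma Fi_deriv:
  assumes "continuous_on {0..1} \<phi>" "t \<in> {0..1}"
  shows "(Fi \<phi> has_real_derivative - (t * \<phi> t)) (at t within {0..1})"
  unfolding Fi_def
  by (rule integral_has_real_derivative') (use assms in \<open>auto intro!: continuous_intros\<close>)

lemma Fi_pos:
  assumes "continuous_on {0..1} \<phi>" "\<forall>x\<in>{0..1}. \<phi> x > 0" "r \<in> {0<..<1}"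
  shows "Fi \<phi> r > 0"
proof -
  have "integral {r..1} (\<lambda>l. 0) < integral {r..1} (\<lambda>l. l * \<phi> l)"
  proof (rule integral_less_real)
    show "continuous_on {r..1} (\<lambda>l. l * \<phi> l)"
      using assms by (auto intro!: continuous_intros elim: continuous_on_subset)
    show "{r<..<1} \<noteq> {}" using assms by auto
    show "\<And>x. x \<in> {r<..<1} \<Longrightarrow> 0 < x * \<phi> x" using assms by auto
  qed auto
  then show ?thesis by (simp add: Fi_def)
qed

lemma Fi_bd:
  assumes "continuous_on {0..1} \<phi>" "bd k \<phi>"
  shows "bd (Suc k) (Fi \<phi>)"
proof -
  have der: "\<forall>x\<in>{0<..<1}. (Fi \<phi> has_real_derivative - (x * \<phi> x)) (at x)"
  proof
    fix x :: real assume x: "x \<in> {0<..<1}"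
    then show "(Fi \<phi> has_real_derivative - (x * \<phi> x)) (at x)"
      using Fi_deriv[OF assms(1), of x] at_I[OF x] by simp
  qed
  have "bd k (\<lambda>x. - 1 * (x * \<phi> x))" using assms by (intro bd_mult bd_const bd_id)
  then have "bd k (deriv (Fi \<phi>))" using der by (elim bd_cong') (auto intro: DERIV_imp_deriv)
  moreover have "continuous_on {0..1} (Fi \<phi>)"
    using Fi_deriv[OF assms(1)] by (meson DERIV_continuous continuous_on_eq_continuous_within)
  then have "bounded (Fi \<phi> ` {0<..<1})" by (rule bnd_cont)
  moreover have "\<forall>x\<in>{0<..<1}. Fi \<phi> field_differentiable at x"
    using der by (auto simp: field_differentiable_def)
  ultimately show ?thesis by simp
qed

lemma dfun_Fi: "dfun \<gamma> \<phi> = (\<lambda>r. \<phi> r powr (-\<gamma>) * Fi \<phi> r)"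
  by (auto simp: dfun_def Fi_def)

lemma Dr_eq:
  assumes "f field_differentiable at r" "r \<noteq> 0"
  shows "Dr f r = deriv f r + 2 * f r / r"
proof -
  have "DERIV f r :> deriv f r" using assms by (simp add: DERIV_deriv_iff_field_differentiable)
  then have "DERIV (\<lambda>s. s\<^sup>2 * f s) r :> 2 * r * f r + r\<^sup>2 * deriv f r"
    by (auto intro!: derivative_eq_intros)
  then have "deriv (\<lambda>s. s\<^sup>2 * f s) r = 2 * r * f r + r\<^sup>2 * deriv f r" by (rule DERIV_imp_deriv)
  then show ?thesis using assms(2) by (simp add: Dr_def field_simps power2_eq_square)
qed

lemma Dr_cong: "\<forall>x\<in>{0<..<1}. f x = g x \<Longrightarrow> r \<in> {0<..<1} \<Longrightarrow> Dr f r = Dr g r"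
  unfolding Dr_def by (subst deriv_cong_I[of "\<lambda>s. s\<^sup>2 * f s" "\<lambda>s. s\<^sup>2 * g s"]) auto

definition ee :: "nat \<Rightarrow> real" where "ee k = (if even k then 2 else 0)"

definition Eop :: "nat \<Rightarrow> (real \<Rightarrow> real) \<Rightarrow> real \<Rightarrow> real" where
  "Eop i f r = (if even i then Dr f r else deriv f r)"

lemma calD_Suc_Eop: "calD (Suc i) Z r = Eop i (calD i Z) r"
  by (simp add: Eop_def)

declare calD.simps(2)[simp del]

lemma Eop_eq: "f field_differentiable at r \<Longrightarrow> r \<in> {0<..<1} \<Longrightarrow> Eop i f r = deriv f r + ee i * f r / r"
  by (auto simp: Eop_def ee_def Dr_eq)

lemma Eop_cong: "\<forall>x\<in>{0<..<1}. f x = g x \<Longrightarrow> r \<in> {0<..<1} \<Longrightarrow> Eop i f r = Eop i g r"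
  by (auto simp: Eop_def Dr_cong deriv_cong_I)

lemma calD_Suc_eq: "calD k X field_differentiable at r \<Longrightarrow> r \<in> {0<..<1} \<Longrightarrow>
   calD (Suc k) X r = deriv (calD k X) r + ee k * calD k X r / r"
  by (simp add: calD_Suc_Eop Eop_eq del: calD.simps)

lemma sm_calD: "sm M X \<Longrightarrow> k \<le> M \<Longrightarrow> sm (M - k) (calD k X)"
proof (induction k)
  case 0 then show ?case by simp
next
  case (Suc k)
  then have s: "sm (Suc (M - Suc k)) (calD k X)" by (simp add: Suc_diff_Suc)
  then have d: "\<forall>x\<in>{0<..<1}. calD k X field_differentiable at x" and s': "sm (M - Suc k) (deriv (calD k X))" by auto
  have "sm (M - Suc k) (\<lambda>x. deriv (calD k X) x + ee k * (1 / x) * calD k X x)"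
    using s s' sm_mono by (intro sm_add sm_mult sm_const sm_inv sm_id) auto
  then have "sm (M - Suc k) (calD (Suc k) X)" using d
    by (elim sm_cong') (auto simp: calD_Suc_eq)
  then show ?case .
qed




lemma alg_calL:
  fixes P Q1 Q2 dd d1 p1 Z DT r \<gamma> :: real and i :: nat
  assumes "P \<noteq> 0" "dd \<noteq> 0" "r = - Q1 * d1 - \<gamma> * Q2 * p1 * dd"
  shows "(((\<gamma> + real i * (\<gamma> - 1)) * (Q2 * P) * p1 * dd ^ (1 + i) + (Q1 * P) * (real (1 + i) * dd ^ i * d1)) * Z
            + (Q1 * P) * dd ^ (1 + i) * DT) / (P * dd ^ i)
         = Q1 * dd * DT + (real i * ((\<gamma> - 1) * Q2 * p1 * dd + Q1 * d1) - r) * Z"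
  using assms(1,2) by (subst assms(3)) (simp add: field_simps power_add)

lemma bd_pow: "bd k f \<Longrightarrow> bd k (\<lambda>x. f x ^ n)"
proof (induction n)
  case 0 then show ?case using bd_const[of k 1] by simp
next
  case (Suc n) then show ?case using bd_mult[OF Suc.prems Suc.IH[OF Suc.prems]] by simp
qed

lemma bd_diff': "bd k f \<Longrightarrow> k \<ge> 1 \<Longrightarrow> x \<in> {0<..<1} \<Longrightarrow> f field_differentiable at x"
  by (cases k) auto

locale setting =
  fixes \<gamma> :: real and \<phi> :: "real \<Rightarrow> real" and M :: nat and m :: real
  assumes phi_bd: "bd M \<phi>" and phi_cont: "continuous_on {0..1} \<phi>"
    and phi_pos: "\<forall>x\<in>{0..1}. \<phi> x > 0" and m_pos: "m > 0" and m_le: "\<forall>x\<in>{0<..<1}. m \<le> \<phi> x"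
    and M3: "M \<ge> 3"
begin

abbreviation d where "d \<equiv> dfun \<gamma> \<phi>"

definition g where "g r = \<phi> r powr (\<gamma> - 1) * d r"

definition A where "A i r = real i * deriv g r - r"

lemma phiI: "r \<in> {0<..<1} \<Longrightarrow> \<phi> r > 0" using phi_pos by auto

lemma phi_der: "r \<in> {0<..<1} \<Longrightarrow> DERIV \<phi> r :> deriv \<phi> r"
proof -
  assume r: "r \<in> {0<..<1}"
  have "bd (Suc (M - 1)) \<phi>" using phi_bd M3 by (simp add: Suc_diff_Suc numeral_3_eq_3 del: bd.simps)
  then show ?thesis using r by (intro bd_diff) 
qed

lemma dphi_bd: "bd (M - 1) (deriv \<phi>)"
proof -
  have "bd (Suc (M - 1)) \<phi>" using phi_bd M3 by (simp add: Suc_diff_Suc numeral_3_eq_3 del: bd.simps)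
  then show ?thesis by simp
qed

lemma phipow_bd: "bd M (\<lambda>r. \<phi> r powr a)"
  using bd_powr[OF phi_bd m_pos m_le] .

lemma d_bd: "bd M d"
proof -
  have "bd M (\<lambda>r. \<phi> r powr (-\<gamma>) * Fi \<phi> r)"
    using phipow_bd bd_mono[OF Fi_bd[OF phi_cont phi_bd]] by (intro bd_mult)
  then show ?thesis by (simp add: dfun_Fi)
qed

lemma d_pos: "r \<in> {0<..<1} \<Longrightarrow> d r > 0"
proof -
  assume r: "r \<in> {0<..<1}"
  have "Fi \<phi> r > 0" using Fi_pos[OF phi_cont phi_pos r] .
  moreover have "\<phi> r powr (-\<gamma>) > 0" using phiI[OF r] by simp
  ultimately show ?thesis by (simp add: dfun_Fi)
qed

lemma Fi_der_I: "r \<in> {0<..<1} \<Longrightarrow> DERIV (Fi \<phi>) r :> - (r * \<phi> r)"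
  using Fi_deriv[OF phi_cont, of r] at_I[of r] by auto

lemma d_der: "r \<in> {0<..<1} \<Longrightarrow>
   DERIV d r :> (-\<gamma>) * \<phi> r powr (-\<gamma> - 1) * deriv \<phi> r * Fi \<phi> r + \<phi> r powr (-\<gamma>) * (- (r * \<phi> r))"
proof -
  assume r: "r \<in> {0<..<1}"
  have "DERIV (\<lambda>x. \<phi> x powr (-\<gamma>)) r :> (-\<gamma>) * \<phi> r powr (-\<gamma> - of_nat 1) * deriv \<phi> r"
    by (rule DERIV_fun_powr[OF phi_der[OF r] phiI[OF r]])
  from DERIV_mult[OF this Fi_der_I[OF r]] show ?thesis
    by (simp add: dfun_Fi algebra_simps)
qed

lemma r_ident: "r \<in> {0<..<1} \<Longrightarrow>
   r = - (\<phi> r powr (\<gamma> - 1)) * deriv d r - \<gamma> * \<phi> r powr (\<gamma> - 2) * deriv \<phi> r * d r"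
proof -
  assume r: "r \<in> {0<..<1}"
  define P where "P = \<phi> r"
  have P: "P > 0" using phiI[OF r] P_def by simp
  have h1: "P powr (\<gamma> - 1) * P powr (-\<gamma> - 1) = P powr (\<gamma> - 2) * P powr (-\<gamma>)"
    using P by (simp add: powr_add[symmetric])
  have h2: "P powr (\<gamma> - 1) * P powr (-\<gamma>) * P = 1"
  proof -
    have a: "P powr (\<gamma> - 1) * P powr (-\<gamma>) = P powr (-1)" using P by (simp add: powr_add[symmetric])
    have b: "P powr (-1) * P = 1" using P by (simp add: powr_minus field_simps)
    show ?thesis using a b by simp
  qed
  have dd: "deriv d r = (-\<gamma>) * P powr (-\<gamma> - 1) * deriv \<phi> r * Fi \<phi> r + P powr (-\<gamma>) * (- (r * P))"
    using DERIV_imp_deriv[OF d_der[OF r]] P_def by simp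
  have dr: "d r = P powr (-\<gamma>) * Fi \<phi> r" by (simp add: dfun_Fi P_def)
  have "- (P powr (\<gamma> - 1)) * deriv d r - \<gamma> * P powr (\<gamma> - 2) * deriv \<phi> r * d r
      = \<gamma> * deriv \<phi> r * Fi \<phi> r * (P powr (\<gamma> - 1) * P powr (-\<gamma> - 1) - P powr (\<gamma> - 2) * P powr (-\<gamma>))
        + r * (P powr (\<gamma> - 1) * P powr (-\<gamma>) * P)"
    unfolding dd dr by (simp add: algebra_simps)
  also have "\<dots> = r" using h1 h2 by simp
  finally show ?thesis by (simp add: P_def)
qed

lemma g_bd: "bd M g"
proof -
  have "bd M (\<lambda>r. \<phi> r powr (\<gamma> - 1) * d r)" using phipow_bd d_bd by (intro bd_mult)
  then show ?thesis by (simp add: g_def[abs_def])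
qed

lemma d_diff: "r \<in> {0<..<1} \<Longrightarrow> DERIV d r :> deriv d r"
  using d_der by (metis DERIV_imp_deriv)

lemma g_der: "r \<in> {0<..<1} \<Longrightarrow>
   DERIV g r :> (\<gamma> - 1) * \<phi> r powr (\<gamma> - 2) * deriv \<phi> r * d r + \<phi> r powr (\<gamma> - 1) * deriv d r"
proof -
  assume r: "r \<in> {0<..<1}"
  have "DERIV (\<lambda>x. \<phi> x powr (\<gamma> - 1)) r :> (\<gamma> - 1) * \<phi> r powr (\<gamma> - 1 - of_nat 1) * deriv \<phi> r"
    by (rule DERIV_fun_powr[OF phi_der[OF r] phiI[OF r]])
  from DERIV_mult[OF this d_diff[OF r]] show ?thesis
    unfolding g_def[abs_def] by (simp add: algebra_simps)
qed

lemma calL_eq: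
  assumes X: "sm M X" and i: "i + 3 \<le> M" and r: "r \<in> {0<..<1}"
  shows "calL \<gamma> \<phi> i (calD i X) r = g r * calD (i + 2) X r + A i r * calD (i + 1) X r"
proof -
  define P where "P = \<phi> r powr (1 + real i * (\<gamma> - 1))"
  define W where "W s = \<phi> s powr (\<gamma> + real i * (\<gamma> - 1)) * d s ^ (1 + i)" for s
  define Z where "Z = calD (Suc i) X"
  have smZ: "sm (M - Suc i) Z" unfolding Z_def using sm_calD[OF X, of "Suc i"] i by simp
  have Zd: "Z field_differentiable at r"
    using smZ i r by (cases "M - Suc i") auto
  have smW: "W field_differentiable at r"
  proof -
    have "bd M W" unfolding W_def[abs_def] using phipow_bd d_bd by (intro bd_mult bd_pow)
    then show ?thesis using M3 r by (intro bd_diff') auto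
  qed
  have key: "calL \<gamma> \<phi> i (calD i X) r = (deriv W r * Z r + W r * calD (i + 2) X r) / (P * d r ^ i)"
  proof (cases "even i")
    case True
    have e1: "(\<lambda>s. \<phi> s powr (\<gamma> + real i * (\<gamma> - 1)) * d s ^ (1 + i) * Dr (calD i X) s) = (\<lambda>s. W s * Z s)"
      using True by (simp add: W_def Z_def calD.simps(2))
    have e2: "deriv Z r = calD (i + 2) X r"
      using True by (simp add: Z_def calD.simps(2))
    show ?thesis using True unfolding calL_def Lop_def e1 P_def
      by (simp add: deriv_mult_I[OF smW Zd] e2 algebra_simps)
  next
    case False
    have e1: "(\<lambda>s. \<phi> s powr (\<gamma> + real i * (\<gamma> - 1)) * d s ^ (1 + i) * deriv (calD i X) s) = (\<lambda>s. W s * Z s)"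
      using False by (simp add: W_def Z_def calD.simps(2))
    have e2: "calD (Suc (Suc i)) X r = deriv Z r + 2 * Z r / r"
      using False Dr_eq[OF Zd] r by (simp add: Z_def calD.simps(2))
    have WZd: "(\<lambda>s. W s * Z s) field_differentiable at r" using smW Zd by (rule field_differentiable_mult)
    show ?thesis using False r unfolding calL_def Lstar_def e1 P_def
      by (simp add: Dr_eq[OF WZd] deriv_mult_I[OF smW Zd] e2 algebra_simps add_divide_distrib)
  qed
  define a where "a = \<gamma> + real i * (\<gamma> - 1)"
  have Wd: "DERIV W r :> a * \<phi> r powr (a - of_nat 1) * deriv \<phi> r * d r ^ (1 + i)
        + \<phi> r powr a * (real (1 + i) * d r ^ i * deriv d r)"
  proof -
    have "DERIV (\<lambda>x. \<phi> x powr a) r :> a * \<phi> r powr (a - of_nat 1) * deriv \<phi> r"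
      by (rule DERIV_fun_powr[OF phi_der[OF r] phiI[OF r]])
    moreover have "DERIV (\<lambda>x. d x ^ (1 + i)) r :> real (1 + i) * d r ^ i * deriv d r"
      using DERIV_power[OF d_diff[OF r], of "1 + i"] by (simp add: algebra_simps)
    ultimately show ?thesis unfolding W_def[abs_def] a_def[symmetric]
      by (rule DERIV_mult[THEN DERIV_cong]) (simp add: algebra_simps)
  qed
  have Pp: "\<phi> r powr a = \<phi> r powr (\<gamma> - 1) * P" "\<phi> r powr (a - of_nat 1) = \<phi> r powr (\<gamma> - 2) * P"
    unfolding P_def a_def using phiI[OF r] by (simp_all add: powr_add[symmetric] algebra_simps)
  have P0: "P \<noteq> 0" unfolding P_def using phiI[OF r] by simp
  have d0: "d r \<noteq> 0" using d_pos[OF r] by simp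
  have Ar: "A i r = real i * ((\<gamma> - 1) * \<phi> r powr (\<gamma> - 2) * deriv \<phi> r * d r + \<phi> r powr (\<gamma> - 1) * deriv d r) - r"
    unfolding A_def using DERIV_imp_deriv[OF g_der[OF r]] by simp
  have gr: "g r = \<phi> r powr (\<gamma> - 1) * d r" by (simp add: g_def)
  show ?thesis
    unfolding key DERIV_imp_deriv[OF Wd] Ar gr Pp W_def a_def[symmetric]
    using alg_calL[OF P0 d0 r_ident[OF r], where DT = "calD (i + 2) X r" and i = i and Z = "Z r"]
    by (simp add: a_def Z_def)
qed

end



inductive Qc :: "(real \<Rightarrow> real) \<Rightarrow> nat \<Rightarrow> nat \<Rightarrow> (real \<Rightarrow> real) \<Rightarrow> bool" for d where
  base: "bd K c \<Longrightarrow> p \<le> 1 + j \<Longrightarrow> l \<le> 2 + j - p \<Longrightarrow> Qc d K j (\<lambda>r. c r * (deriv ^^ l) d r / r ^ p)"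
| zero: "Qc d K j (\<lambda>r. 0)"
| add: "Qc d K j f \<Longrightarrow> Qc d K j h \<Longrightarrow> Qc d K j (\<lambda>r. f r + h r)"
| cong: "Qc d K j f \<Longrightarrow> \<forall>r\<in>{0<..<1}. h r = f r \<Longrightarrow> Qc d K j h"

lemma Q_mono_j: "Qc d K j f \<Longrightarrow> Qc d K (Suc j) f"
proof (induction rule: Qc.induct)
  case (base K c p j l) then show ?case by (intro Qc.base) auto
qed (auto intro: Qc.intros)

lemma Q_mono_j': "Qc d K j f \<Longrightarrow> j \<le> j' \<Longrightarrow> Qc d K j' f"
proof (induction j')
  case 0 then show ?case by simp
next
  case (Suc j') then show ?case using Q_mono_j by (metis le_Suc_eq)
qed

lemma Q_mono_K: "Qc d K j f \<Longrightarrow> K' \<le> K \<Longrightarrow> Qc d K' j f"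
proof (induction rule: Qc.induct)
  case (base K c p j l) then show ?case using bd_mono' by (intro Qc.base) auto
qed (auto intro: Qc.intros)

lemma Q_scale: "Qc d K j f \<Longrightarrow> Qc d K j (\<lambda>r. a * f r)"
proof (induction rule: Qc.induct)
  case (base K c p j l)
  have "Qc d K j (\<lambda>r. (a * c r) * (deriv ^^ l) d r / r ^ p)"
    using base by (intro Qc.base bd_mult bd_const) auto
  then show ?case by (rule Qc.cong) auto
next
  case (add K j f h)
  have "Qc d K j (\<lambda>r. a * f r + a * h r)" using add by (intro Qc.add)
  then show ?case by (rule Qc.cong) (auto simp: algebra_simps)
qed (auto intro: Qc.intros)

lemma Q_div: "Qc d K j f \<Longrightarrow> Qc d K (Suc j) (\<lambda>r. f r / r)"
proof (induction rule: Qc.induct)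
  case (base K c p j l)
  have "Qc d K (Suc j) (\<lambda>r. c r * (deriv ^^ l) d r / r ^ Suc p)"
    using base by (intro Qc.base) auto
  then show ?case by (rule Qc.cong) auto
next
  case (add K j f h)
  have "Qc d K (Suc j) (\<lambda>r. f r / r + h r / r)" using add by (intro Qc.add)
  then show ?case by (rule Qc.cong) (auto simp: add_divide_distrib)
qed (auto intro: Qc.intros)

lemma Q_deriv_aux:
  assumes "Qc d K' j f" "K' = Suc K"
    and dd: "\<forall>l \<le> 2 + j. \<forall>x\<in>{0<..<1}. (deriv ^^ l) d field_differentiable at x"
  shows "(\<forall>x\<in>{0<..<1}. f field_differentiable at x) \<and> Qc d K (Suc j) (deriv f)"
  using assms
proof (induction rule: Qc.induct)
  case (base K' c p j l)
  let ?D = "(deriv ^^ l) d"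
  let ?D' = "(deriv ^^ Suc l) d"
  have cK: "bd (Suc K) c" using base by simp
  have der: "DERIV (\<lambda>r. c r * ?D r / r ^ p) x :>
      deriv c x * ?D x / x ^ p + c x * ?D' x / x ^ p + (- real p * c x) * ?D x / x ^ Suc p"
    if x: "x \<in> {0<..<1}" for x
  proof -
    have c': "DERIV c x :> deriv c x" using cK x by (intro bd_diff)
    have D': "DERIV ?D x :> ?D' x"
      using base.prems(2) base.hyps x by (simp add: DERIV_deriv_iff_field_differentiable)
    have x0: "x \<noteq> 0" using x by simp
    have pp: "0 < p \<Longrightarrow> x ^ p = x * x ^ (p - Suc 0)" by (metis Suc_pred power_Suc)
    show ?thesis
      using x0 pp by (auto intro!: derivative_eq_intros c' D' simp: field_simps power_Suc)
  qed
  have "Qc d K (Suc j) (\<lambda>x. deriv c x * ?D x / x ^ p + c x * ?D' x / x ^ p + (- real p * c x) * ?D x / x ^ Suc p)"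
  proof (intro Qc.add)
    show "Qc d K (Suc j) (\<lambda>x. deriv c x * ?D x / x ^ p)" using cK base.hyps by (intro Qc.base) auto
    show "Qc d K (Suc j) (\<lambda>x. c x * ?D' x / x ^ p)" using cK bd_mono base.hyps by (intro Qc.base) auto
    show "Qc d K (Suc j) (\<lambda>x. (- real p * c x) * ?D x / x ^ Suc p)"
      using cK bd_mono base.hyps by (intro Qc.base bd_mult bd_const) auto
  qed
  moreover have "\<forall>x\<in>{0<..<1}. deriv (\<lambda>r. c r * ?D r / r ^ p) x =
      deriv c x * ?D x / x ^ p + c x * ?D' x / x ^ p + (- real p * c x) * ?D x / x ^ Suc p"
    using DERIV_imp_deriv[OF der] by blast
  ultimately have "Qc d K (Suc j) (deriv (\<lambda>r. c r * ?D r / r ^ p))"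
    by (rule Qc.cong)
  moreover have "\<forall>x\<in>{0<..<1}. (\<lambda>r. c r * ?D r / r ^ p) field_differentiable at x"
    using der unfolding field_differentiable_def by blast
  ultimately show ?case by blast
next
  case (zero K' j)
  have "Qc d K (Suc j) (\<lambda>r. 0)" by (rule Qc.zero)
  then have "Qc d K (Suc j) (deriv (\<lambda>r. 0))" by (rule Qc.cong) auto
  then show ?case by auto
next
  case (add K' j f h)
  then have f: "\<forall>x\<in>{0<..<1}. f field_differentiable at x" "Qc d K (Suc j) (deriv f)"
    and h: "\<forall>x\<in>{0<..<1}. h field_differentiable at x" "Qc d K (Suc j) (deriv h)" by auto
  have "Qc d K (Suc j) (\<lambda>x. deriv f x + deriv h x)" using f h by (intro Qc.add) auto
  then have "Qc d K (Suc j) (deriv (\<lambda>x. f x + h x))"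
    by (rule Qc.cong) (use f h in \<open>auto intro: deriv_add_I\<close>)
  then show ?case using f h by (auto intro: field_differentiable_add)
next
  case (cong K' j f h)
  then have f: "\<forall>x\<in>{0<..<1}. f field_differentiable at x" "Qc d K (Suc j) (deriv f)" by auto
  have "\<forall>x\<in>{0<..<1}. h field_differentiable at x"
    using f(1) cong.hyps(2) diff_cong_I[of f h] by auto
  moreover have "Qc d K (Suc j) (deriv h)"
    using f(2) by (rule Qc.cong) (use cong.hyps(2) deriv_cong_I[of h f] in auto)
  ultimately show ?case by blast
qed

lemma Q_deriv:
  assumes "Qc d (Suc K) j f"
    and "\<forall>l \<le> 2 + j. \<forall>x\<in>{0<..<1}. (deriv ^^ l) d field_differentiable at x"
  shows "\<forall>x\<in>{0<..<1}. f field_differentiable at x" "Qc d K (Suc j) (deriv f)"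
  using Q_deriv_aux[OF assms(1) refl assms(2)] by auto

lemma bnd_on_I_to_01:
  fixes c :: "real \<Rightarrow> real"
  assumes "bounded (c ` {0<..<1::real})"
  shows "bounded ((\<lambda>r. if r \<in> {0<..<1} \<and> P then c r else 0) ` {0..1})"
proof -
  obtain B where B: "\<forall>x\<in>{0<..<1}. \<bar>c x\<bar> \<le> B" using assms by (auto simp: bounded_abs_iff)
  have "\<forall>x\<in>{0..1}. \<bar>if x \<in> {0<..<1} \<and> P then c x else 0\<bar> \<le> max B 0"
    using B by (auto simp del: greaterThanLessThan_iff)
  then show ?thesis by (rule iffD2[OF bounded_abs_iff, OF exI])
qed

lemma bnd_add01:
  assumes "bounded (f ` S)" "bounded (g ` S)"
  shows "bounded ((\<lambda>r. f r + g r :: real) ` S)"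
proof -
  obtain A B where "\<forall>x\<in>S. \<bar>f x\<bar> \<le> A" "\<forall>x\<in>S. \<bar>g x\<bar> \<le> B"
    using assms by (auto simp: bounded_abs_iff)
  then have "\<forall>x\<in>S. \<bar>f x + g x\<bar> \<le> A + B" by (smt (verit))
  then show ?thesis by (auto simp: bounded_abs_iff)
qed

lemma Q_rep:
  assumes "Qc d K j f"
  shows "\<exists>c. (\<forall>k l. bounded (c k l ` {0..1})) \<and>
     (\<forall>r\<in>{0<..<1}. f r = (\<Sum>k=1..2+j. (\<Sum>l=0..k. c k l r * (deriv ^^ l) d r) / r ^ (2 + j - k)))"
  using assms
proof (induction rule: Qc.induct)
  case (base K c p j l)
  define k0 where "k0 = 2 + j - p"
  define c' where "c' k l' r = (if r \<in> {0<..<1} \<and> (k = k0 \<and> l' = l) then c r else 0)" for k l' r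
  have bnd: "\<forall>k l'. bounded (c' k l' ` {0..1})"
    unfolding c'_def using bd_bounded[OF base.hyps(1)] by (intro allI bnd_on_I_to_01)
  have "c r * (deriv ^^ l) d r / r ^ p =
      (\<Sum>k=1..2+j. (\<Sum>l'=0..k. c' k l' r * (deriv ^^ l') d r) / r ^ (2 + j - k))"
    if r: "r \<in> {0<..<1}" for r
  proof -
    have inner: "(\<Sum>l'=0..k. c' k l' r * (deriv ^^ l') d r) = (if k = k0 then c r * (deriv ^^ l) d r else 0)" for k
    proof (cases "k = k0")
      case True
      have "(\<Sum>l'=0..k. c' k l' r * (deriv ^^ l') d r) = (\<Sum>l'\<in>{0..k}. if l' = l then c r * (deriv ^^ l') d r else 0)"
        using r True by (intro sum.cong) (auto simp: c'_def)
      also have "\<dots> = c r * (deriv ^^ l) d r" using True base.hyps unfolding k0_def by (subst sum.delta) auto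
      finally show ?thesis using True by simp
    next
      case False then show ?thesis by (simp add: c'_def)
    qed
    have "(\<Sum>k=1..2+j. (\<Sum>l'=0..k. c' k l' r * (deriv ^^ l') d r) / r ^ (2 + j - k))
        = (\<Sum>k\<in>{1..2+j}. if k = k0 then c r * (deriv ^^ l) d r / r ^ (2 + j - k) else 0)"
      by (intro sum.cong) (auto simp: inner)
    also have "\<dots> = c r * (deriv ^^ l) d r / r ^ (2 + j - k0)"
      using base.hyps unfolding k0_def by (subst sum.delta) auto
    also have "2 + j - k0 = p" using base.hyps unfolding k0_def by simp
    finally show ?thesis by simp
  qed
  then show ?case using bnd by blast
next
  case (zero K j)
  show ?case by (rule exI[of _ "\<lambda>k l r. 0"]) (auto simp: bounded_abs_iff)
next
  case (add K j f h)
  then obtain c1 c2 where c1: "\<forall>k l. bounded (c1 k l ` {0..1})"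
      "\<forall>r\<in>{0<..<1}. f r = (\<Sum>k=1..2+j. (\<Sum>l=0..k. c1 k l r * (deriv ^^ l) d r) / r ^ (2 + j - k))"
    and c2: "\<forall>k l. bounded (c2 k l ` {0..1})"
      "\<forall>r\<in>{0<..<1}. h r = (\<Sum>k=1..2+j. (\<Sum>l=0..k. c2 k l r * (deriv ^^ l) d r) / r ^ (2 + j - k))"
    by blast
  show ?case
  proof (intro exI[of _ "\<lambda>k l r. c1 k l r + c2 k l r"] conjI)
    show "\<forall>k l. bounded ((\<lambda>r. c1 k l r + c2 k l r) ` {0..1})" using c1 c2 by (auto intro: bnd_add01)
    show "\<forall>r\<in>{0<..<1}. f r + h r = (\<Sum>k=1..2+j. (\<Sum>l=0..k. (c1 k l r + c2 k l r) * (deriv ^^ l) d r) / r ^ (2 + j - k))"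
      using c1(2) c2(2) by (simp add: distrib_right sum.distrib add_divide_distrib)
  qed
next
  case (cong K j f h)
  then show ?case by auto
qed




context setting
begin

lemma d_iter_diff: "l + 1 \<le> M \<Longrightarrow> x \<in> {0<..<1} \<Longrightarrow> (deriv ^^ l) d field_differentiable at x"
  using bd_deriv_iter[OF d_bd, of l] by (intro bd_diff'[of "M - l"]) auto

lemma d_iter_diff': "j + 3 \<le> M \<Longrightarrow> \<forall>l \<le> 2 + j. \<forall>x\<in>{0<..<1}. (deriv ^^ l) d field_differentiable at x"
  using d_iter_diff by auto

lemma dg_bd: "bd (M - 1) (deriv g)"
proof -
  have "bd (Suc (M - 1)) g" using g_bd M3 by (simp add: Suc_diff_Suc numeral_3_eq_3 del: bd.simps)
  then show ?thesis by simp
qed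

lemma A_bd: "bd (M - 1) (A i)"
proof -
  have "bd (M - 1) (\<lambda>r. real i * deriv g r + (-1) * r)"
    using dg_bd by (intro bd_add bd_mult bd_const bd_id)
  then show ?thesis by (simp add: A_def[abs_def])
qed

lemma dA_bd: "bd (M - 2) (deriv (A i))"
proof -
  have "bd (Suc (M - 2)) (A i)" using A_bd[of i] M3 by (simp add: Suc_diff_Suc numeral_3_eq_3 numeral_2_eq_2 del: bd.simps)
  then show ?thesis by simp
qed

lemma Q_bdd:
  assumes "bd K b" "K \<le> M - 1"
  shows "Qc d K 0 b"
proof -
  have c1: "bd K (\<lambda>r. (-1) * b r * \<phi> r powr (\<gamma> - 1))"
    using assms bd_mono'[OF phipow_bd] by (intro bd_mult bd_const) auto
  have c2: "bd K (\<lambda>r. (- \<gamma>) * b r * \<phi> r powr (\<gamma> - 2) * deriv \<phi> r)"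
    using assms bd_mono'[OF phipow_bd] bd_mono'[OF dphi_bd]
    by (intro bd_mult bd_const) auto
  have "Qc d K 0 (\<lambda>r. ((-1) * b r * \<phi> r powr (\<gamma> - 1)) * (deriv ^^ 1) d r / r ^ 1
                   + ((- \<gamma>) * b r * \<phi> r powr (\<gamma> - 2) * deriv \<phi> r) * (deriv ^^ 0) d r / r ^ 1)"
    using c1 c2 by (intro Qc.add Qc.base) auto
  then show ?thesis
  proof (rule Qc.cong, intro ballI)
    fix r :: real assume r: "r \<in> {0<..<1}"
    have "b r = b r * r / r" using r by simp
    also have "\<dots> = ((-1) * b r * \<phi> r powr (\<gamma> - 1)) * (deriv ^^ 1) d r / r ^ 1
                   + ((- \<gamma>) * b r * \<phi> r powr (\<gamma> - 2) * deriv \<phi> r) * (deriv ^^ 0) d r / r ^ 1"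
      by (subst r_ident[OF r]) (simp add: algebra_simps add_divide_distrib diff_divide_distrib)
    finally show "b r = \<dots>" .
  qed
qed

lemma A_div:
  assumes "K \<le> M - 1"
  shows "Qc d K 0 (\<lambda>r. A i r / r)"
proof -
  have c1: "bd K (\<lambda>r. real i * (\<gamma> - 1) * \<phi> r powr (\<gamma> - 2) * deriv \<phi> r)"
    using assms bd_mono'[OF phipow_bd] bd_mono'[OF dphi_bd] by (intro bd_mult bd_const) auto
  have c2: "bd K (\<lambda>r. real i * \<phi> r powr (\<gamma> - 1))"
    using assms bd_mono'[OF phipow_bd] by (intro bd_mult bd_const) auto
  have "Qc d K 0 (\<lambda>r. (real i * (\<gamma> - 1) * \<phi> r powr (\<gamma> - 2) * deriv \<phi> r) * (deriv ^^ 0) d r / r ^ 1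
                   + (real i * \<phi> r powr (\<gamma> - 1)) * (deriv ^^ 1) d r / r ^ 1 + (-1))"
    using c1 c2 assms by (intro Qc.add Qc.base Q_bdd bd_const) auto
  then show ?thesis
  proof (rule Qc.cong, intro ballI)
    fix r :: real assume r: "r \<in> {0<..<1}"
    show "A i r / r = (real i * (\<gamma> - 1) * \<phi> r powr (\<gamma> - 2) * deriv \<phi> r) * (deriv ^^ 0) d r / r ^ 1
                   + (real i * \<phi> r powr (\<gamma> - 1)) * (deriv ^^ 1) d r / r ^ 1 + (-1)"
      unfolding A_def DERIV_imp_deriv[OF g_der[OF r]] using r
      by (simp add: field_simps)
  qed
qed

definition Bq where "Bq i r = deriv (A i) r + (ee i - ee (Suc i)) * A i r / r"
definition qdf where "qdf i q j r = deriv (q j) r + (ee i - ee (i - j)) * q j r / r"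
definition qnf where "qnf i q j r = (if j < i then q j r else 0) + (if j = 0 then Bq i r else qdf i q (j - 1) r)"

lemma step_identity:
  assumes X: "sm M X" and iM: "i + 4 \<le> M" and r: "r \<in> {0<..<1}"
    and qdiff: "\<forall>j<i. \<forall>x\<in>{0<..<1}. q j field_differentiable at x"
    and IH: "\<forall>x\<in>{0<..<1}. calD i (Lop \<gamma> \<phi> 0 X) x = g x * calD (i + 2) X x + A i x * calD (i + 1) X x
               + (\<Sum>j<i. q j x * calD (i - j) X x)"
  shows "calD (Suc i) (Lop \<gamma> \<phi> 0 X) r = g r * calD (Suc i + 2) X r + A (Suc i) r * calD (Suc i + 1) X r
          + (\<Sum>j<Suc i. qnf i q j r * calD (Suc i - j) X r)"
proof -
  let ?D = "\<lambda>k. calD k X"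
  have r0: "r \<noteq> 0" using r by simp
  have Dd: "DERIV (?D k) r :> ?D (Suc k) r - ee k * ?D k r / r" if k: "k \<le> i + 2" for k
  proof -
    have "sm (M - k) (?D k)" using sm_calD[OF X, of k] k iM by simp
    moreover have "M - k = Suc (M - k - 1)" using k iM by simp
    ultimately have "sm (Suc (M - k - 1)) (?D k)" by simp
    then have dk: "?D k field_differentiable at r" using r by simp
    then show ?thesis using calD_Suc_eq[OF dk r] by (simp add: DERIV_deriv_iff_field_differentiable)
  qed
  have gd: "DERIV g r :> deriv g r" using g_der[OF r] DERIV_imp_deriv by metis
  have Ad: "DERIV (A i) r :> deriv (A i) r"
  proof -
    have "bd (Suc (M - 2)) (A i)" using A_bd[of i] iM by (simp add: Suc_diff_Suc numeral_2_eq_2 del: bd.simps)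
    then show ?thesis using r by (intro bd_diff)
  qed
  have qd: "DERIV (q j) r :> deriv (q j) r" if "j < i" for j
    using qdiff that r by (simp add: DERIV_deriv_iff_field_differentiable)
  define F where "F x = g x * ?D (i + 2) x + A i x * ?D (i + 1) x + (\<Sum>j<i. q j x * ?D (i - j) x)" for x
  define S' where "S' = (\<Sum>j<i. deriv (q j) r * ?D (i - j) r + q j r * (?D (Suc (i - j)) r - ee (i - j) * ?D (i - j) r / r))"
  define F' where "F' = (deriv g r * ?D (i + 2) r + g r * (?D (Suc (i + 2)) r - ee (i + 2) * ?D (i + 2) r / r))
      + (deriv (A i) r * ?D (i + 1) r + A i r * (?D (Suc (i + 1)) r - ee (i + 1) * ?D (i + 1) r / r)) + S'"
  have FD: "DERIV F r :> F'"
  proof -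
    have t1: "DERIV (\<lambda>x. g x * ?D (i + 2) x) r :>
        deriv g r * ?D (i + 2) r + g r * (?D (Suc (i + 2)) r - ee (i + 2) * ?D (i + 2) r / r)"
      by (rule DERIV_cong[OF DERIV_mult[OF gd Dd]]) (auto simp: algebra_simps)
    have t2: "DERIV (\<lambda>x. A i x * ?D (i + 1) x) r :>
        deriv (A i) r * ?D (i + 1) r + A i r * (?D (Suc (i + 1)) r - ee (i + 1) * ?D (i + 1) r / r)"
      by (rule DERIV_cong[OF DERIV_mult[OF Ad Dd]]) (auto simp: algebra_simps)
    have t3: "DERIV (\<lambda>x. \<Sum>j<i. q j x * ?D (i - j) x) r :> S'"
      unfolding S'_def
    proof (rule DERIV_sum)
      fix j assume j: "j \<in> {..<i}"
      show "DERIV (\<lambda>x. q j x * ?D (i - j) x) r :>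
          deriv (q j) r * ?D (i - j) r + q j r * (?D (Suc (i - j)) r - ee (i - j) * ?D (i - j) r / r)"
        using j by (intro DERIV_cong[OF DERIV_mult[OF qd Dd]]) (auto simp: algebra_simps)
    qed
    show ?thesis unfolding F_def[abs_def] F'_def using DERIV_add[OF DERIV_add[OF t1 t2] t3] by simp
  qed
  have "calD (Suc i) (Lop \<gamma> \<phi> 0 X) r = Eop i F r"
    unfolding calD_Suc_Eop using IH r by (intro Eop_cong) (auto simp: F_def)
  also have "\<dots> = F' + ee i * F r / r"
  proof -
    have "F field_differentiable at r" using FD unfolding field_differentiable_def by blast
    then show ?thesis using r by (simp add: Eop_eq DERIV_imp_deriv[OF FD])
  qed
  finally have L: "calD (Suc i) (Lop \<gamma> \<phi> 0 X) r = F' + ee i * F r / r" .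
  have sumR: "(\<Sum>j<Suc i. qnf i q j r * ?D (Suc i - j) r)
      = (\<Sum>j<i. q j r * ?D (Suc i - j) r) + Bq i r * ?D (Suc i) r + (\<Sum>j<i. qdf i q j r * ?D (i - j) r)"
  proof -
    have "(\<Sum>j<Suc i. qnf i q j r * ?D (Suc i - j) r)
        = (\<Sum>j<Suc i. (if j < i then q j r else 0) * ?D (Suc i - j) r)
          + (\<Sum>j<Suc i. (if j = 0 then Bq i r else qdf i q (j - 1) r) * ?D (Suc i - j) r)"
      unfolding qnf_def by (simp add: distrib_right sum.distrib)
    also have "(\<Sum>j<Suc i. (if j < i then q j r else 0) * ?D (Suc i - j) r) = (\<Sum>j<i. q j r * ?D (Suc i - j) r)"
      by (simp add: sum.lessThan_Suc)
    also have "(\<Sum>j<Suc i. (if j = 0 then Bq i r else qdf i q (j - 1) r) * ?D (Suc i - j) r)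
        = Bq i r * ?D (Suc i) r + (\<Sum>j<i. qdf i q j r * ?D (i - j) r)"
      by (simp add: sum.lessThan_Suc_shift del: sum.lessThan_Suc)
    finally show ?thesis by simp
  qed
  have sumL: "S' + ee i * (\<Sum>j<i. q j r * ?D (i - j) r) / r
      = (\<Sum>j<i. q j r * ?D (Suc i - j) r) + (\<Sum>j<i. qdf i q j r * ?D (i - j) r)"
  proof -
    have "S' + ee i * (\<Sum>j<i. q j r * ?D (i - j) r) / r
        = (\<Sum>j<i. deriv (q j) r * ?D (i - j) r + q j r * (?D (Suc (i - j)) r - ee (i - j) * ?D (i - j) r / r)
             + ee i * (q j r * ?D (i - j) r) / r)"
      unfolding S'_def by (simp add: sum_distrib_left sum_divide_distrib sum.distrib)
    also have "\<dots> = (\<Sum>j<i. q j r * ?D (Suc i - j) r + qdf i q j r * ?D (i - j) r)"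
    proof (rule sum.cong[OF refl])
      fix j assume j: "j \<in> {..<i}"
      then have "Suc i - j = Suc (i - j)" by auto
      then show "deriv (q j) r * ?D (i - j) r + q j r * (?D (Suc (i - j)) r - ee (i - j) * ?D (i - j) r / r)
             + ee i * (q j r * ?D (i - j) r) / r = q j r * ?D (Suc i - j) r + qdf i q j r * ?D (i - j) r"
        using r0 by (simp add: qdf_def field_simps)
    qed
    also have "\<dots> = (\<Sum>j<i. q j r * ?D (Suc i - j) r) + (\<Sum>j<i. qdf i q j r * ?D (i - j) r)"
      by (simp add: sum.distrib)
    finally show ?thesis .
  qed
  have ee2: "ee (i + 2) = ee i" by (simp add: ee_def)
  have AS: "A (Suc i) r = A i r + deriv g r" by (simp add: A_def algebra_simps)
  have "F' + ee i * F r / r = g r * ?D (i + 3) r + A (Suc i) r * ?D (i + 2) r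
       + ((\<Sum>j<i. q j r * ?D (Suc i - j) r) + Bq i r * ?D (Suc i) r + (\<Sum>j<i. qdf i q j r * ?D (i - j) r))"
  proof -
    have "F' + ee i * F r / r = (deriv g r * ?D (i + 2) r + g r * (?D (Suc (i + 2)) r - ee (i + 2) * ?D (i + 2) r / r))
      + (deriv (A i) r * ?D (i + 1) r + A i r * (?D (Suc (i + 1)) r - ee (i + 1) * ?D (i + 1) r / r))
      + ee i * (g r * ?D (i + 2) r + A i r * ?D (i + 1) r) / r
      + (S' + ee i * (\<Sum>j<i. q j r * ?D (i - j) r) / r)"
      unfolding F'_def F_def using r0 by (simp add: field_simps)
    also note sumL
    finally have eq: "F' + ee i * F r / r = (deriv g r * ?D (i + 2) r + g r * (?D (Suc (i + 2)) r - ee (i + 2) * ?D (i + 2) r / r))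
      + (deriv (A i) r * ?D (i + 1) r + A i r * (?D (Suc (i + 1)) r - ee (i + 1) * ?D (i + 1) r / r))
      + ee i * (g r * ?D (i + 2) r + A i r * ?D (i + 1) r) / r
      + ((\<Sum>j<i. q j r * ?D (Suc i - j) r) + (\<Sum>j<i. qdf i q j r * ?D (i - j) r))" .
    show ?thesis unfolding eq AS ee2 Bq_def using r0
      by (simp add: field_simps numeral_3_eq_3 numeral_2_eq_2)
  qed
  then show ?thesis unfolding L sumR by (simp add: numeral_3_eq_3 numeral_2_eq_2)
qed

lemma main_ind:
  "i + 3 \<le> M \<Longrightarrow> \<exists>q. (\<forall>j<i. Qc d (M - 2 - i) j (q j)) \<and>
     (\<forall>X. sm M X \<longrightarrow> (\<forall>r\<in>{0<..<1}. calD i (Lop \<gamma> \<phi> 0 X) r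
        = g r * calD (i + 2) X r + A i r * calD (i + 1) X r + (\<Sum>j<i. q j r * calD (i - j) X r)))"
proof (induction i)
  case 0
  show ?case
  proof (intro exI[of _ "\<lambda>j r. 0"] conjI allI impI ballI)
    fix X r assume X: "sm M X" and r: "r \<in> {0<..<1::real}"
    have "calL \<gamma> \<phi> 0 (calD 0 X) r = g r * calD (0 + 2) X r + A 0 r * calD (0 + 1) X r"
      using calL_eq[OF X _ r, of 0] M3 by simp
    then show "calD 0 (Lop \<gamma> \<phi> 0 X) r = g r * calD (0 + 2) X r + A 0 r * calD (0 + 1) X r
        + (\<Sum>j<0. (\<lambda>j r. 0) j r * calD (0 - j) X r)"
      by (simp add: calL_def)
  qed simp
next
  case (Suc i)
  then have iM: "i + 3 \<le> M" by simp
  from Suc.IH[OF iM] obtain q where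
    qQ: "\<forall>j<i. Qc d (M - 2 - i) j (q j)" and
    qI: "\<forall>X. sm M X \<longrightarrow> (\<forall>r\<in>{0<..<1}. calD i (Lop \<gamma> \<phi> 0 X) r
        = g r * calD (i + 2) X r + A i r * calD (i + 1) X r + (\<Sum>j<i. q j r * calD (i - j) X r))"
    by blast
  define K where "K = M - 2 - Suc i"
  have MK: "M - 2 - i = Suc K" using Suc.prems unfolding K_def by simp
  have KM: "K \<le> M - 2" unfolding K_def by simp
  have qQ': "Qc d (Suc K) j (q j)" if "j < i" for j using qQ MK that by simp
  have dd: "\<forall>l \<le> 2 + j. \<forall>x\<in>{0<..<1}. (deriv ^^ l) d field_differentiable at x" if "j < i" for j
    using d_iter_diff' that iM by simp
  have qdiff: "\<forall>j<i. \<forall>x\<in>{0<..<1}. q j field_differentiable at x"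
    using Q_deriv(1)[OF qQ' dd] by blast
  have qnQ: "Qc d K j (qnf i q j)" if j: "j < Suc i" for j
  proof -
    have P1: "Qc d K j (\<lambda>r. if j < i then q j r else 0)"
    proof (cases "j < i")
      case True
      have "Qc d K j (q j)" using Q_mono_K[OF qQ'[OF True]] by simp
      then show ?thesis by (rule Qc.cong) (simp add: True)
    next
      case False
      then show ?thesis using Qc.zero[of d K j] by simp
    qed
    have P2: "Qc d K j (\<lambda>r. if j = 0 then Bq i r else qdf i q (j - 1) r)"
    proof (cases j)
      case 0
      have "Qc d K 0 (\<lambda>r. deriv (A i) r + (ee i - ee (Suc i)) * (A i r / r))"
        using KM by (intro Qc.add Q_bdd[OF bd_mono'[OF dA_bd]] Q_scale A_div) auto
      then have "Qc d K 0 (Bq i)" by (rule Qc.cong) (simp add: Bq_def)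
      then show ?thesis using 0 by simp
    next
      case (Suc j')
      then have j': "j' < i" using j by simp
      have "Qc d K (Suc j') (\<lambda>r. deriv (q j') r + (ee i - ee (i - j')) * (q j' r / r))"
      proof (intro Qc.add Q_scale Q_div)
        show "Qc d K (Suc j') (deriv (q j'))" using Q_deriv(2)[OF qQ'[OF j'] dd[OF j']] .
        show "Qc d K j' (q j')" using Q_mono_K[OF qQ'[OF j']] by simp
      qed
      then have "Qc d K (Suc j') (qdf i q j')" by (rule Qc.cong) (simp add: qdf_def)
      then show ?thesis using Suc by simp
    qed
    have "Qc d K j (\<lambda>r. (if j < i then q j r else 0) + (if j = 0 then Bq i r else qdf i q (j - 1) r))"
      using P1 P2 by (rule Qc.add)
    then show ?thesis by (rule Qc.cong) (simp add: qnf_def)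
  qed
  show ?case
  proof (intro exI[of _ "qnf i q"] conjI allI impI ballI)
    fix j assume "j < Suc i"
    then show "Qc d (M - 2 - Suc i) j (qnf i q j)" using qnQ K_def by simp
  next
    fix X r assume X: "sm M X" and r: "r \<in> {0<..<1::real}"
    show "calD (Suc i) (Lop \<gamma> \<phi> 0 X) r = g r * calD (Suc i + 2) X r + A (Suc i) r * calD (Suc i + 1) X r
          + (\<Sum>j<Suc i. qnf i q j r * calD (Suc i - j) X r)"
      using step_identity[OF X _ r qdiff] qI X Suc.prems by simp
  qed
qed

end



theorem lemmaA2:
  fixes \<gamma> :: real and i :: nat
  assumes "\<gamma> > 1" and "i \<ge> 1"
  shows "\<exists>N::nat. \<forall>\<phi>. Ck_on N {0..1} \<phi> \<and> (\<forall>r\<in>{0..1}. \<phi> r > 0)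
           \<and> (\<phi> has_real_derivative 0) (at 0 within {0..1}) \<longrightarrow>
     (\<exists>c :: nat \<Rightarrow> nat \<Rightarrow> nat \<Rightarrow> real \<Rightarrow> real.
        (\<forall>j k l. bounded (c j k l ` {0..1})) \<and>
        (\<forall>X. Ck_on N {0..1} X \<longrightarrow>
           (\<forall>r\<in>{0<..<1}.
              calD i (Lop \<gamma> \<phi> 0 X) r =
                calL \<gamma> \<phi> i (calD i X) r
                + (\<Sum>j=0..i-1.
                     (\<Sum>k=1..2+j. (\<Sum>l=0..k. c j k l r * (deriv ^^ l) (dfun \<gamma> \<phi>) r)
                                     / r ^ (2 + j - k))
                     * calD (i - j) X r))))"
proof (intro exI[of _ "i + 3"] allI impI, elim conjE)
  fix \<phi> :: "real \<Rightarrow> real"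
  assume phiC: "Ck_on (i + 3) {0..1} \<phi>" and phipos: "\<forall>r\<in>{0..1}. \<phi> r > 0"
  have pbd: "bd (i + 3) \<phi>" using Ck_bd[OF phiC] .
  have pc: "continuous_on {0..1} \<phi>" using Ck_cont[OF phiC] .
  obtain x0 where x0: "x0 \<in> {0..1::real}" "\<forall>y\<in>{0..1}. \<phi> x0 \<le> \<phi> y"
    using continuous_attains_inf[OF compact_Icc _ pc] by auto
  interpret S: setting \<gamma> \<phi> "i + 3" "\<phi> x0"
  proof
    show "bd (i + 3) \<phi>" by (rule pbd)
    show "continuous_on {0..1} \<phi>" by (rule pc)
    show "\<forall>x\<in>{0..1}. 0 < \<phi> x" by (rule phipos)
    show "0 < \<phi> x0" using phipos x0(1) by blast
    show "\<forall>x\<in>{0<..<1}. \<phi> x0 \<le> \<phi> x" using x0(2) by simp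
    show "3 \<le> i + 3" by simp
  qed
  obtain q where qQ: "\<forall>j<i. Qc (dfun \<gamma> \<phi>) (i + 3 - 2 - i) j (q j)" and
    qI: "\<forall>X. sm (i + 3) X \<longrightarrow> (\<forall>r\<in>{0<..<1}. calD i (Lop \<gamma> \<phi> 0 X) r
        = S.g r * calD (i + 2) X r + S.A i r * calD (i + 1) X r + (\<Sum>j<i. q j r * calD (i - j) X r))"
    using S.main_ind[of i] by auto
  have "\<forall>j. \<exists>C. j < i \<longrightarrow> (\<forall>k l. bounded (C k l ` {0..1})) \<and>
     (\<forall>r\<in>{0<..<1}. q j r = (\<Sum>k=1..2+j. (\<Sum>l=0..k. C k l r * (deriv ^^ l) (dfun \<gamma> \<phi>) r) / r ^ (2 + j - k)))"
  proof
    fix j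
    show "\<exists>C. j < i \<longrightarrow> (\<forall>k l. bounded (C k l ` {0..1})) \<and>
     (\<forall>r\<in>{0<..<1}. q j r = (\<Sum>k=1..2+j. (\<Sum>l=0..k. C k l r * (deriv ^^ l) (dfun \<gamma> \<phi>) r) / r ^ (2 + j - k)))"
    proof (cases "j < i")
      case True
      from Q_rep[OF qQ[rule_format, OF True]] show ?thesis by blast
    next
      case False then show ?thesis by blast
    qed
  qed
  from choice[OF this] obtain C where C: "\<And>j. j < i \<Longrightarrow> (\<forall>k l. bounded (C j k l ` {0..1})) \<and>
     (\<forall>r\<in>{0<..<1}. q j r = (\<Sum>k=1..2+j. (\<Sum>l=0..k. C j k l r * (deriv ^^ l) (dfun \<gamma> \<phi>) r) / r ^ (2 + j - k)))"
    by blast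
  define c where "c j = (if j < i then C j else (\<lambda>k l r. 0))" for j
  show "\<exists>c :: nat \<Rightarrow> nat \<Rightarrow> nat \<Rightarrow> real \<Rightarrow> real.
        (\<forall>j k l. bounded (c j k l ` {0..1})) \<and>
        (\<forall>X. Ck_on (i + 3) {0..1} X \<longrightarrow>
           (\<forall>r\<in>{0<..<1}.
              calD i (Lop \<gamma> \<phi> 0 X) r =
                calL \<gamma> \<phi> i (calD i X) r
                + (\<Sum>j=0..i-1.
                     (\<Sum>k=1..2+j. (\<Sum>l=0..k. c j k l r * (deriv ^^ l) (dfun \<gamma> \<phi>) r)
                                     / r ^ (2 + j - k))
                     * calD (i - j) X r)))"
  proof (intro exI[of _ c] conjI allI impI ballI)
    fix j k l
    show "bounded (c j k l ` {0..1})"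
    proof (cases "j < i")
      case True then show ?thesis using C[OF True] by (simp add: c_def)
    next
      case False
      have "bounded ((\<lambda>r::real. 0::real) ` {0..1})" by (rule iffD2[OF bounded_abs_iff, OF exI[of _ 0]]) simp
      then show ?thesis using False by (simp add: c_def)
    qed
  next
    fix X r assume XC: "Ck_on (i + 3) {0..1} X" and r: "r \<in> {0<..<1::real}"
    have X: "sm (i + 3) X" using bd_sm[OF Ck_bd[OF XC]] .
    have set: "{0..i-1} = {..<i}" using assms(2) by auto
    have "(\<Sum>j=0..i-1. (\<Sum>k=1..2+j. (\<Sum>l=0..k. c j k l r * (deriv ^^ l) (dfun \<gamma> \<phi>) r) / r ^ (2 + j - k))
                     * calD (i - j) X r) = (\<Sum>j<i. q j r * calD (i - j) X r)"
      unfolding set using C r by (intro sum.cong refl) (auto simp: c_def)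
    moreover have "calL \<gamma> \<phi> i (calD i X) r = S.g r * calD (i + 2) X r + S.A i r * calD (i + 1) X r"
      using S.calL_eq[OF X _ r] by simp
    ultimately show "calD i (Lop \<gamma> \<phi> 0 X) r = calL \<gamma> \<phi> i (calD i X) r
                + (\<Sum>j=0..i-1. (\<Sum>k=1..2+j. (\<Sum>l=0..k. c j k l r * (deriv ^^ l) (dfun \<gamma> \<phi>) r)
                                     / r ^ (2 + j - k)) * calD (i - j) X r)"
      using qI X r by simp
  qed
qed


end
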